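(* Let $n\ge5$ and $\alpha^*=\bigl(n(n-1)(n-2),-6(n-2),-8\bigr)$. Then for all $v\in\mathbb{C}^{n-1}$, $$Q\,g_{\alpha^*}(Pv)=c_n\,\bigl(v_1T_1(v),\,v_2T_2(v),\dots,v_{n-1}T_{n-1}(v)\bigr)$$ for a nonzero constant $c_n$ depending only on $n$, where $$T_k(v)=v_k^3-\frac{4}{n-1}\,v_k^2\,S_1(\widehat{v_k})+\frac{12}{(n-1)(n-2)}\,v_k\,S_2(\widehat{v_k})-\frac{24}{(n-1)(n-2)(n-4)}\,S_3(\widehat{v_k}).$$ (For $n=8$, after multiplying by $7$, $T_k=7v_k^3-4v_k^2S_1(\widehat{v_k})+2v_kS_2(\widehat{v_k})-S_3(\widehat{v_k})$.)
   Context: For $x\in\mathbb{C}^n$ let $F_k(x)=\sum_{\ell=1}^n x_\ell^k$, $f_k(x)_\ell=F_k(x)-n\,x_\ell^k$, and $g_\alpha=\alpha_1 f_4+\alpha_2F_2f_2+\alpha_3F_3f_1$. Define linear maps $P:\mathbb{C}^{n-1}\to\mathbb{C}^n$ by $(Pv)_i=\bigl(\sum_{j=1}^{n-1}v_j\bigr)-n\,v_i$ for $1\le i\le n-1$ and $(Pv)_n=\sum_{j=1}^{n-1}v_j$, and $Q:\mathbb{C}^n\to\mathbb{C}^{n-1}$ by $(Qx)_i=x_n-x_i$. (These place the $n$-point orbit of $[1-n,1,\dots,1]$ at the coordinate vertices $[1,0,\dots,0],\dots,[0,\dots,0,1]$ and $[1,\dots,1]$.) For $v\in\mathbb{C}^{n-1}$,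 $\widehat{v_k}\in\mathbb{C}^{n-2}$ denotes $v$ with the $k$-th coordinate deleted, and $S_j$ is the $j$-th elementary symmetric polynomial in $n-2$ variables. *)

theory Defs
  imports Complex_Main
begin

text \<open>Vectors in C^m are represented as functions nat => complex, using the
  coordinates 1..m only (1-based, as in the paper).\<close>

definition F :: "nat \<Rightarrow> nat \<Rightarrow> (nat \<Rightarrow> complex) \<Rightarrow> complex" where
  "F n k x = (\<Sum>l=1..n. x l ^ k)"

definition f :: "nat \<Rightarrow> nat \<Rightarrow> (nat \<Rightarrow> complex) \<Rightarrow> nat \<Rightarrow> complex" where
  "f n k x l = F n k x - of_nat n * x l ^ k"

definition g :: "nat \<Rightarrow> complex \<times> complex \<times> complex \<Rightarrow> (nat \<Rightarrow> complex) \<Rightarrow> nat \<Rightarrow> complex" where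
  "g n \<alpha> x l = (case \<alpha> of (a1, a2, a3) \<Rightarrow>
      a1 * f n 4 x l + a2 * F n 2 x * f n 2 x l + a3 * F n 3 x * f n 1 x l)"

definition P :: "nat \<Rightarrow> (nat \<Rightarrow> complex) \<Rightarrow> nat \<Rightarrow> complex" where
  "P n v i = (if i = n then (\<Sum>j=1..n-1. v j) else (\<Sum>j=1..n-1. v j) - of_nat n * v i)"

definition Q :: "nat \<Rightarrow> (nat \<Rightarrow> complex) \<Rightarrow> nat \<Rightarrow> complex" where
  "Q n x i = x n - x i"

definition esym :: "nat \<Rightarrow> nat set \<Rightarrow> (nat \<Rightarrow> complex) \<Rightarrow> complex" where
  "esym j I v = (\<Sum>A\<in>{A. A \<subseteq> I \<and> card A = j}. \<Prod>i\<in>A. v i)"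

definition Shat :: "nat \<Rightarrow> nat \<Rightarrow> (nat \<Rightarrow> complex) \<Rightarrow> nat \<Rightarrow> complex" where
  "Shat n j v k = esym j ({1..n-1} - {k}) v"

definition T :: "nat \<Rightarrow> (nat \<Rightarrow> complex) \<Rightarrow> nat \<Rightarrow> complex" where
  "T n v k = v k ^ 3
     - 4 / (of_nat n - 1) * v k ^ 2 * Shat n 1 v k
     + 12 / ((of_nat n - 1) * (of_nat n - 2)) * v k * Shat n 2 v k
     - 24 / ((of_nat n - 1) * (of_nat n - 2) * (of_nat n - 4)) * Shat n 3 v k"

definition alpha_star :: "nat \<Rightarrow> complex \<times> complex \<times> complex" where
  "alpha_star n = (of_nat n * (of_nat n - 1) * (of_nat n - 2), - 6 * (of_nat n - 2), - 8)"

end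

theory Submission
  imports Defs
begin

lemma esym_insert:
  assumes "finite I" "a \<notin> I"
  shows "esym (Suc j) (insert a I) v = esym (Suc j) I v + v a * esym j I v"
proof -
  have seteq: "{A. A \<subseteq> insert a I \<and> card A = Suc j} =
     {A. A \<subseteq> I \<and> card A = Suc j} \<union> insert a ` {A. A \<subseteq> I \<and> card A = j}"
  proof (intro equalityI subsetI)
    fix A assume "A \<in> {A. A \<subseteq> insert a I \<and> card A = Suc j}"
    hence A: "A \<subseteq> insert a I" "card A = Suc j" by auto
    show "A \<in> {A. A \<subseteq> I \<and> card A = Suc j} \<union> insert a ` {A. A \<subseteq> I \<and> card A = j}"
    proof (cases "a \<in> A")
      case True
      have fA: "finite A" using A assms(1) finite_subset by blast
      have "A = insert a (A - {a})" using True by auto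
      moreover have "card (A - {a}) = j" using A True fA by simp
      moreover have "A - {a} \<subseteq> I" using A by auto
      ultimately show ?thesis by blast
    next
      case False thus ?thesis using A by auto
    qed
  next
    fix A assume "A \<in> {A. A \<subseteq> I \<and> card A = Suc j} \<union> insert a ` {A. A \<subseteq> I \<and> card A = j}"
    thus "A \<in> {A. A \<subseteq> insert a I \<and> card A = Suc j}"
    proof
      assume "A \<in> insert a ` {A. A \<subseteq> I \<and> card A = j}"
      then obtain B where B: "B \<subseteq> I" "card B = j" "A = insert a B" by auto
      have "finite B" using B assms(1) finite_subset by blast
      moreover have "a \<notin> B" using B assms by auto
      ultimately show ?thesis using B by auto
    qed auto
  qed
  have fin1: "finite {A. A \<subseteq> I \<and> card A = Suc j}" using assms(1) by simp
  have fin2: "finite (insert a ` {A. A \<subseteq> I \<and> card A = j})" using assms(1) by simp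
  have disj: "{A. A \<subseteq> I \<and> card A = Suc j} \<inter> insert a ` {A. A \<subseteq> I \<and> card A = j} = {}"
    using assms(2) by auto
  have inj: "inj_on (insert a) {A. A \<subseteq> I \<and> card A = j}"
  proof (rule inj_onI)
    fix x y assume "x \<in> {A. A \<subseteq> I \<and> card A = j}" "y \<in> {A. A \<subseteq> I \<and> card A = j}" "insert a x = insert a y"
    hence "a \<notin> x" "a \<notin> y" using assms(2) by auto
    thus "x = y" using \<open>insert a x = insert a y\<close> by (metis Diff_insert_absorb)
  qed
  have "esym (Suc j) (insert a I) v = esym (Suc j) I v +
      (\<Sum>A\<in>insert a ` {A. A \<subseteq> I \<and> card A = j}. \<Prod>i\<in>A. v i)"
    unfolding esym_def seteq by (rule sum.union_disjoint[OF fin1 fin2 disj])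
  also have "(\<Sum>A\<in>insert a ` {A. A \<subseteq> I \<and> card A = j}. \<Prod>i\<in>A. v i)
      = (\<Sum>A\<in>{A. A \<subseteq> I \<and> card A = j}. \<Prod>i\<in>insert a A. v i)"
    by (simp add: sum.reindex[OF inj])
  also have "\<dots> = (\<Sum>A\<in>{A. A \<subseteq> I \<and> card A = j}. v a * (\<Prod>i\<in>A. v i))"
  proof (rule sum.cong[OF refl])
    fix A assume "A \<in> {A. A \<subseteq> I \<and> card A = j}"
    hence "finite A" "a \<notin> A" using assms finite_subset by auto
    thus "(\<Prod>i\<in>insert a A. v i) = v a * (\<Prod>i\<in>A. v i)" by simp
  qed
  also have "\<dots> = v a * esym j I v" unfolding esym_def by (simp add: sum_distrib_left)
  finally show ?thesis .
qed

lemma esym_0: assumes "finite I" shows "esym 0 I v = 1"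
proof -
  have "{A. A \<subseteq> I \<and> card A = 0} = {{}}" using assms finite_subset by fastforce
  thus ?thesis unfolding esym_def by simp
qed

lemma esym_empty: "esym (Suc j) {} v = 0"
  unfolding esym_def by simp

lemma esym_1: assumes "finite I" shows "esym 1 I v = (\<Sum>i\<in>I. v i)"
  using assms
proof (induction I rule: finite_induct)
  case empty thus ?case using esym_empty[of 0] by simp
next
  case (insert a I) thus ?case using esym_insert[of I a 0 v] esym_0 by simp
qed

lemma esym_2: assumes "finite I"
  shows "2 * esym 2 I v = (\<Sum>i\<in>I. v i)^2 - (\<Sum>i\<in>I. v i ^ 2)"
  using assms
proof (induction I rule: finite_induct)
  case empty thus ?case using esym_empty[of 1] by (simp add: numeral_2_eq_2)
next
  case (insert a I)
  have "esym 2 (insert a I) v = esym 2 I v + v a * esym 1 I v"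
    using esym_insert[of I a 1 v] insert by (simp add: numeral_2_eq_2)
  thus ?case using insert esym_1[of I v] by (simp add: algebra_simps power2_eq_square)
qed

lemma esym_3: assumes "finite I"
  shows "6 * esym 3 I v = (\<Sum>i\<in>I. v i)^3 - 3 * (\<Sum>i\<in>I. v i) * (\<Sum>i\<in>I. v i ^ 2)
     + 2 * (\<Sum>i\<in>I. v i ^ 3)"
  using assms
proof (induction I rule: finite_induct)
  case empty thus ?case using esym_empty[of 2] by (simp add: numeral_3_eq_3)
next
  case (insert a I)
  have "esym 3 (insert a I) v = esym 3 I v + v a * esym 2 I v"
    using esym_insert[of I a 2 v] insert by (simp add: numeral_3_eq_3 numeral_2_eq_2)
  hence "6 * esym 3 (insert a I) v = 6 * esym 3 I v + 3 * v a * (2 * esym 2 I v)" by simp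
  also have "\<dots> = (\<Sum>i\<in>I. v i)^3 - 3 * (\<Sum>i\<in>I. v i) * (\<Sum>i\<in>I. v i ^ 2)
     + 2 * (\<Sum>i\<in>I. v i ^ 3) + 3 * v a * ((\<Sum>i\<in>I. v i)^2 - (\<Sum>i\<in>I. v i ^ 2))"
    using insert esym_2[of I v] by simp
  finally show ?case using insert
    by (simp add: algebra_simps power2_eq_square power3_eq_cube)
qed

theorem mainTheorem12:
  fixes n :: nat
  assumes "n \<ge> 5"
  shows "\<exists>c::complex. c \<noteq> 0 \<and>
           (\<forall>v::nat \<Rightarrow> complex. \<forall>k\<in>{1..n-1}.
              Q n (g n (alpha_star n) (P n v)) k = c * (v k * T n v k))"
proof -
  define N :: complex where "N = of_nat n"
  have N1: "N - 1 \<noteq> 0" "N - 2 \<noteq> 0" "N - 4 \<noteq> 0" "N \<noteq> 0"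
  proof -
    have a: "(of_nat n::complex) \<noteq> of_nat m" if "m < 5" for m
      using that assms by (simp only: of_nat_eq_iff)
    show "N - 1 \<noteq> 0" "N - 2 \<noteq> 0" "N - 4 \<noteq> 0" "N \<noteq> 0"
      using a[of 1] a[of 2] a[of 4] a[of 0] unfolding N_def by auto
  qed
  show ?thesis
  proof (intro exI conjI allI ballI)
    show "N^5 * (N-1) * (N-2) * (N-4) \<noteq> 0" using N1 by simp
  next
    fix v :: "nat \<Rightarrow> complex" and k assume k: "k \<in> {1..n-1}"
    define J where "J = {1..n-1}"
    define I where "I = J - {k}"
    have fI: "finite I" unfolding I_def J_def by simp
    define s where "s = (\<Sum>i\<in>J. v i)"
    define p2 where "p2 = (\<Sum>i\<in>J. v i ^ 2)"
    define p3 where "p3 = (\<Sum>i\<in>J. v i ^ 3)"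
    define t where "t = (\<Sum>i\<in>I. v i)"
    define q2 where "q2 = (\<Sum>i\<in>I. v i ^ 2)"
    define q3 where "q3 = (\<Sum>i\<in>I. v i ^ 3)"
    have kJ: "k \<in> J" using k unfolding J_def by simp
    have rem: "(\<Sum>i\<in>J. h i) = h k + (\<Sum>i\<in>I. h i)" for h :: "nat \<Rightarrow> complex"
      using sum.remove[of J k h] kJ unfolding I_def J_def by simp
    have st: "s = v k + t" unfolding s_def t_def by (rule rem)
    have p2t: "p2 = v k ^ 2 + q2" unfolding p2_def q2_def by (rule rem)
    have p3t: "p3 = v k ^ 3 + q3" unfolding p3_def q3_def by (rule rem)
    have cardJ: "of_nat (card J) = N - 1" unfolding J_def N_def using assms by (simp add: of_nat_diff)
    have Pl: "P n v l = s - N * v l" if "l \<in> J" for l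
      using that assms unfolding P_def J_def s_def N_def by auto
    have Pn: "P n v n = s" unfolding P_def s_def J_def by simp
    have Fsplit: "F n j (P n v) = (\<Sum>l\<in>J. (s - N * v l) ^ j) + s ^ j" for j
    proof -
      have "{1..n} = insert n J" unfolding J_def using assms by auto
      moreover have "n \<notin> J" unfolding J_def using assms by auto
      ultimately have "F n j (P n v) = P n v n ^ j + (\<Sum>l\<in>J. P n v l ^ j)"
        unfolding F_def J_def by simp
      also have "(\<Sum>l\<in>J. P n v l ^ j) = (\<Sum>l\<in>J. (s - N * v l) ^ j)"
        using Pl by simp
      finally show ?thesis using Pn by simp
    qed
    have F2: "F n 2 (P n v) = N^2 * p2 - N * s^2"
    proof -
      have "(\<Sum>l\<in>J. (s - N * v l) ^ 2) = (\<Sum>l\<in>J. s^2 - 2 * N * s * v l + N^2 * v l ^ 2)"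
        by (simp add: power2_eq_square algebra_simps)
      also have "\<dots> = of_nat (card J) * s^2 - 2 * N * s * s + N^2 * p2"
        unfolding s_def p2_def by (simp add: sum.distrib sum_subtractf sum_distrib_left)
      finally show ?thesis using Fsplit[of 2] cardJ by (simp add: algebra_simps power2_eq_square)
    qed
    have F3: "F n 3 (P n v) = -2 * N * s^3 + 3 * N^2 * s * p2 - N^3 * p3"
    proof -
      have "(\<Sum>l\<in>J. (s - N * v l) ^ 3) = (\<Sum>l\<in>J. s^3 - 3 * N * s^2 * v l + 3 * N^2 * s * v l ^ 2 - N^3 * v l ^ 3)"
        by (simp add: power2_eq_square power3_eq_cube algebra_simps)
      also have "\<dots> = of_nat (card J) * s^3 - 3 * N * s^2 * s + 3 * N^2 * s * p2 - N^3 * p3"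
        unfolding s_def p2_def p3_def by (simp add: sum.distrib sum_subtractf sum_distrib_left)
      finally show ?thesis using Fsplit[of 3] cardJ by (simp add: algebra_simps power2_eq_square power3_eq_cube)
    qed
    have S1: "Shat n 1 v k = t" unfolding Shat_def t_def I_def J_def using esym_1 by simp
    have S2: "Shat n 2 v k = (t^2 - q2) / 2" unfolding Shat_def t_def q2_def
      using esym_2[OF fI, of v] unfolding I_def J_def by (simp add: field_simps)
    have S3: "Shat n 3 v k = (t^3 - 3 * t * q2 + 2 * q3) / 6" unfolding Shat_def t_def q2_def q3_def
      using esym_3[OF fI, of v] unfolding I_def J_def by (simp add: field_simps)
    have Pk: "P n v k = s - N * v k" using Pl kJ by simp
    have lhs: "Q n (g n (alpha_star n) (P n v)) k =
       N * (N-1) * (N-2) * (N * ((s - N * v k)^4 - s^4))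
       - 6 * (N-2) * F n 2 (P n v) * (N * ((s - N * v k)^2 - s^2))
       - 8 * F n 3 (P n v) * (N * ((s - N * v k) - s))"
      unfolding Q_def g_def alpha_star_def f_def Pk Pn N_def by (simp add: algebra_simps)
    have TD: "T n v k * ((N-1)*(N-2)*(N-4)) = v k^3 * (N-1)*(N-2)*(N-4) - 4 * v k^2 * t * (N-2)*(N-4)
        + 6 * v k * (t^2 - q2) * (N-4) - 4 * (t^3 - 3 * t * q2 + 2 * q3)"
    proof -
      define a where "a = N - 1"
      define b where "b = N - 2"
      define c where "c = N - 4"
      have abc: "a \<noteq> 0" "b \<noteq> 0" "c \<noteq> 0" using N1 unfolding a_def b_def c_def by auto
      have "T n v k * (a*b*c) = v k^3 * a*b*c - 4 * v k^2 * t * b*c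
        + 6 * v k * (t^2 - q2) * c - 4 * (t^3 - 3 * t * q2 + 2 * q3)"
        unfolding T_def S1 S2 S3 N_def[symmetric] a_def[symmetric] b_def[symmetric] c_def[symmetric]
        using abc by (simp add: field_simps)
      thus ?thesis unfolding a_def b_def c_def by simp
    qed
    have "Q n (g n (alpha_star n) (P n v)) k = N^5 * v k * (T n v k * ((N-1)*(N-2)*(N-4)))"
      unfolding lhs F2 F3 TD st p2t p3t by algebra
    thus "Q n (g n (alpha_star n) (P n v)) k = N^5 * (N-1) * (N-2) * (N-4) * (v k * T n v k)"
      by (simp add: algebra_simps)
  qed
qed

end
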